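(* Let $R$ be a noetherian integral domain, $n\ge1$, $R[n]=R[t]/(t^n)$, and let $(x_1,\ldots,x_p)$ be a regular sequence in $R[n]$. Then the ideal $I$ of $R[n]$ generated by $x_1,\ldots,x_p$ is a balanced $R[n]$-module.
   Context: For an $R[n]$-module $M$ of finite type and $0\le i\le n$, let $M^{(i)}=\{m\in M: t^im=0\}$ (the second canonical filtration $0=M^{(0)}\subset M^{(1)}\subset\cdots\subset M^{(n)}=M$), and for $0<i\le n$ let $G^{(i)}(M)=M^{(i)}/M^{(i-1)}$, an $R$-module. For $1\le i\le n-1$, multiplication by $t$ induces an injective morphism of $R$-modules $\lambda_i:G^{(i+1)}(M)\to G^{(i)}(M)$. Set $\boldsymbol{\lambda}(M)=\lambda_1\circ\cdots\circ\lambda_{n-1}:G^{(n)}(M)\to G^{(1)}(M)$. $M$ is called balanced if $\boldsymbol{\lambda}(M)$ is surjective. *)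

theory Defs
  imports "HOL-Computational_Algebra.Polynomial"
begin

definition is_ideal :: "'a::comm_ring_1 set \<Rightarrow> bool" where
  "is_ideal I \<longleftrightarrow> 0 \<in> I \<and> (\<forall>x\<in>I. \<forall>y\<in>I. x + y \<in> I) \<and> (\<forall>r x. x \<in> I \<longrightarrow> r * x \<in> I)"

definition gen_ideal :: "'a::comm_ring_1 set \<Rightarrow> 'a set" where
  "gen_ideal S = {x. \<exists>F c. finite F \<and> F \<subseteq> S \<and> x = (\<Sum>s\<in>F. c s * s)}"

definition noetherian_ring :: "'a::comm_ring_1 itself \<Rightarrow> bool" where
  "noetherian_ring _ \<longleftrightarrow> (\<forall>I::'a set. is_ideal I \<longrightarrow> (\<exists>F. finite F \<and> I = gen_ideal F))"

text \<open>Elements of R[n] are represented by their unique representatives: polynomials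
  of degree < n (all coefficients at index \<ge> n vanish).\<close>

definition Rn :: "nat \<Rightarrow> 'a::comm_ring_1 poly set" where
  "Rn n = {p. \<forall>k\<ge>n. coeff p k = 0}"

definition rmult :: "nat \<Rightarrow> 'a::comm_ring_1 poly \<Rightarrow> 'a poly \<Rightarrow> 'a poly" where
  "rmult n p q = poly_cutoff n (p * q)"

definition Rn_ideal_gen :: "nat \<Rightarrow> 'a::comm_ring_1 poly list \<Rightarrow> 'a poly set" where
  "Rn_ideal_gen n xs = {m. \<exists>a. (\<forall>i<length xs. a i \<in> Rn n) \<and>
                              m = poly_cutoff n (\<Sum>i<length xs. a i * xs ! i)}"

definition Rn_regular_seq :: "nat \<Rightarrow> 'a::comm_ring_1 poly list \<Rightarrow> bool" where
  "Rn_regular_seq n xs \<longleftrightarrow> set xs \<subseteq> Rn n \<and>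
     (\<forall>i<length xs. \<forall>a\<in>Rn n. rmult n a (xs ! i) \<in> Rn_ideal_gen n (take i xs)
                               \<longrightarrow> a \<in> Rn_ideal_gen n (take i xs)) \<and>
     1 \<notin> Rn_ideal_gen n xs"

definition tvar :: "nat \<Rightarrow> 'a::comm_ring_1 poly" where
  "tvar n = poly_cutoff n [:0, 1:]"

definition filt :: "nat \<Rightarrow> 'a::comm_ring_1 poly set \<Rightarrow> nat \<Rightarrow> 'a poly set" where
  "filt n M i = {m \<in> M. poly_cutoff n ([:0, 1:] ^ i * m) = 0}"

text \<open>G^(i)(M) = M^(i)/M^(i-1), represented as the set of cosets.\<close>
definition coset :: "'a::ab_group_add set \<Rightarrow> 'a \<Rightarrow> 'a set" where
  "coset N m = {m + y | y. y \<in> N}"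

definition Gr :: "nat \<Rightarrow> 'a::comm_ring_1 poly set \<Rightarrow> nat \<Rightarrow> 'a poly set set" where
  "Gr n M i = coset (filt n M (i - 1)) ` filt n M i"

text \<open>\<lambda>_i : G^(i+1) \<rightarrow> G^(i), induced by multiplication by t
  (class of m \<mapsto> class of t*m; independent of the representative).\<close>
definition lam :: "nat \<Rightarrow> 'a::comm_ring_1 poly set \<Rightarrow> nat \<Rightarrow> 'a poly set \<Rightarrow> 'a poly set" where
  "lam n M i C = coset (filt n M (i - 1)) (rmult n (tvar n) (SOME m. m \<in> C))"

fun lam_comp :: "nat \<Rightarrow> 'a::comm_ring_1 poly set \<Rightarrow> nat \<Rightarrow> 'a poly set \<Rightarrow> 'a poly set" where
  "lam_comp n M 0 = id"
| "lam_comp n M (Suc k) = lam_comp n M k \<circ> lam n M (Suc k)"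

definition bold_lam :: "nat \<Rightarrow> 'a::comm_ring_1 poly set \<Rightarrow> 'a poly set \<Rightarrow> 'a poly set" where
  "bold_lam n M = lam_comp n M (n - 1)"

definition balanced :: "nat \<Rightarrow> 'a::comm_ring_1 poly set \<Rightarrow> bool" where
  "balanced n M \<longleftrightarrow> bold_lam n M ` Gr n M n = Gr n M 1"

end

theory Submission
  imports Defs
begin

abbreviation XX :: "'a::comm_ring_1 poly" where "XX \<equiv> [:0, 1:]"

lemma XX_pow: "(XX::'a::comm_ring_1 poly) ^ n = monom 1 n"
  by (simp add: monom_altdef)

lemma cut_decomp: "(p::'a::comm_ring_1 poly) = poly_cutoff n p + XX ^ n * poly_shift n p"
  by (auto simp: poly_eq_iff XX_pow coeff_monom_mult coeff_poly_shift coeff_poly_cutoff)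

lemma cut_add_mult: "poly_cutoff n ((p::'a::comm_ring_1 poly) + XX ^ n * b) = poly_cutoff n p"
  by (auto simp: poly_eq_iff XX_pow coeff_monom_mult coeff_poly_cutoff)

lemma cut_plus: "poly_cutoff n ((p::'a::comm_ring_1 poly) + q) = poly_cutoff n p + poly_cutoff n q"
  by (auto simp: poly_eq_iff coeff_poly_cutoff)

lemma cut_minus: "poly_cutoff n ((p::'a::comm_ring_1 poly) - q) = poly_cutoff n p - poly_cutoff n q"
  by (auto simp: poly_eq_iff coeff_poly_cutoff)

lemma cut_uminus: "poly_cutoff n (- (p::'a::comm_ring_1 poly)) = - poly_cutoff n p"
  by (auto simp: poly_eq_iff coeff_poly_cutoff)

lemma cut_mult_cut: "poly_cutoff n (poly_cutoff n (p::'a::comm_ring_1 poly) * q) = poly_cutoff n (p * q)"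
proof -
  have "p * q = poly_cutoff n p * q + XX ^ n * (poly_shift n p * q)"
    by (subst cut_decomp[of p n]) (simp add: algebra_simps)
  then show ?thesis by (metis cut_add_mult)
qed

lemma cut_mult_cut2: "poly_cutoff n (q * poly_cutoff n (p::'a::comm_ring_1 poly)) = poly_cutoff n (q * p)"
  by (metis cut_mult_cut mult.commute)

lemma cut_Rn: "p \<in> Rn n \<Longrightarrow> poly_cutoff n p = p"
  by (auto simp: poly_eq_iff coeff_poly_cutoff Rn_def)

lemma cut_in_Rn: "poly_cutoff n p \<in> Rn n"
  by (auto simp: coeff_poly_cutoff Rn_def)

lemma cut_cut: "poly_cutoff n (poly_cutoff n (p::'a::comm_ring_1 poly)) = poly_cutoff n p"
  by (rule cut_Rn[OF cut_in_Rn])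

lemma cut_XXn: "poly_cutoff n ((XX::'a::comm_ring_1 poly) ^ n * b) = 0"
  using cut_add_mult[of n 0 b] by simp

definition JJ :: "nat \<Rightarrow> 'a::comm_ring_1 poly list \<Rightarrow> 'a poly set" where
  "JJ n ys = {q. \<exists>a b. q = (\<Sum>j<length ys. a j * ys!j) + XX^n * b}"

lemma JJ_add: "p \<in> JJ n ys \<Longrightarrow> q \<in> JJ n ys \<Longrightarrow> p + q \<in> JJ n ys"
proof -
  assume "p \<in> JJ n ys" "q \<in> JJ n ys"
  then obtain a b c d where "p = (\<Sum>j<length ys. a j * ys!j) + XX^n * b"
    "q = (\<Sum>j<length ys. c j * ys!j) + XX^n * d" by (auto simp: JJ_def)
  then have "p + q = (\<Sum>j<length ys. (\<lambda>j. a j + c j) j * ys!j) + XX^n * (b + d)"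
    by (simp add: algebra_simps sum.distrib)
  then show ?thesis unfolding JJ_def by (intro CollectI exI, assumption)
qed

lemma JJ_mult: "q \<in> JJ n ys \<Longrightarrow> r * q \<in> JJ n ys"
proof -
  assume "q \<in> JJ n ys"
  then obtain c d where "q = (\<Sum>j<length ys. c j * ys!j) + XX^n * d" by (auto simp: JJ_def)
  then have "r * q = (\<Sum>j<length ys. (\<lambda>j. r * c j) j * ys!j) + XX^n * (r * d)"
    by (simp add: algebra_simps sum_distrib_left)
  then show ?thesis unfolding JJ_def by (intro CollectI exI, assumption)
qed

lemma JJ_uminus: "q \<in> JJ n ys \<Longrightarrow> - q \<in> JJ n ys"
  using JJ_mult[of q n ys "-1"] by simp

lemma JJ_diff: "p \<in> JJ n ys \<Longrightarrow> q \<in> JJ n ys \<Longrightarrow> p - q \<in> JJ n ys"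
  using JJ_add[OF _ JJ_uminus] by (metis diff_conv_add_uminus)

lemma JJ_XXn: "XX^n * b \<in> JJ n ys"
proof -
  have "XX^n * b = (\<Sum>j<length ys. (\<lambda>j. 0) j * ys!j) + XX^n * b" by simp
  then show ?thesis unfolding JJ_def by (intro CollectI exI, assumption)
qed

lemma JJ_0: "0 \<in> JJ n ys"
  using JJ_XXn[of n 0] by simp

lemma JJ_cut_iff: "poly_cutoff n q \<in> JJ n ys \<longleftrightarrow> q \<in> JJ n ys"
proof
  assume "poly_cutoff n q \<in> JJ n ys"
  then show "q \<in> JJ n ys" using JJ_add[OF _ JJ_XXn] cut_decomp[of q n] by metis
next
  assume "q \<in> JJ n ys"
  then have "q - XX^n * poly_shift n q \<in> JJ n ys" using JJ_diff JJ_XXn by blast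
  moreover have "q - XX^n * poly_shift n q = poly_cutoff n q"
    using cut_decomp[of q n] by (metis add_diff_cancel_right')
  ultimately show "poly_cutoff n q \<in> JJ n ys" by simp
qed

lemma Rn_ideal_gen_eq: "Rn_ideal_gen n ys = Rn n \<inter> JJ n ys"
proof (intro equalityI subsetI)
  fix m assume "m \<in> Rn_ideal_gen n ys"
  then obtain a where m: "m = poly_cutoff n (\<Sum>i<length ys. a i * ys ! i)"
    by (auto simp: Rn_ideal_gen_def)
  have "(\<Sum>i<length ys. a i * ys ! i) \<in> JJ n ys"
    unfolding JJ_def by (rule CollectI, rule exI[of _ a], rule exI[of _ 0], simp)
  then show "m \<in> Rn n \<inter> JJ n ys" using m cut_in_Rn JJ_cut_iff by blast
next
  fix m assume "m \<in> Rn n \<inter> JJ n ys"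
  then obtain a b where mR: "m \<in> Rn n" and m: "m = (\<Sum>j<length ys. a j * ys!j) + XX^n * b"
    by (auto simp: JJ_def)
  have "(\<Sum>j<length ys. a j * ys!j) = (\<Sum>j<length ys. poly_cutoff n (a j) * ys!j)
       + XX^n * (\<Sum>j<length ys. poly_shift n (a j) * ys!j)"
  proof -
    have "(\<Sum>j<length ys. a j * ys!j) = (\<Sum>j<length ys. (poly_cutoff n (a j) + XX ^ n * poly_shift n (a j)) * ys!j)"
      by (rule sum.cong, simp, metis cut_decomp)
    also have "\<dots> = (\<Sum>j<length ys. poly_cutoff n (a j) * ys!j)
       + XX^n * (\<Sum>j<length ys. poly_shift n (a j) * ys!j)"
      by (simp add: algebra_simps sum.distrib sum_distrib_left)
    finally show ?thesis .
  qed
  then have "m = poly_cutoff n (\<Sum>j<length ys. poly_cutoff n (a j) * ys!j)"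
    using m cut_Rn[OF mR] cut_add_mult
    by (metis (no_types, lifting) add.assoc distrib_left)
  moreover have "\<forall>i<length ys. poly_cutoff n (a i) \<in> Rn n" using cut_in_Rn by blast
  ultimately show "m \<in> Rn_ideal_gen n ys" unfolding Rn_ideal_gen_def
    by (intro CollectI exI[of _ "\<lambda>i. poly_cutoff n (a i)"] conjI) auto
qed

lemma JJ_Nil: "JJ n [] = {XX^n * b | b. True}"
  by (auto simp: JJ_def)

lemma JJ_take: 
  assumes "i \<le> length xs"
  shows "JJ n (take i xs) = {q. \<exists>a b. q = (\<Sum>j<i. a j * xs!j) + XX^n * b}"
proof -
  have "(\<Sum>j<length (take i xs). a j * (take i xs)!j) = (\<Sum>j<i. a j * xs!j)" for a
    using assms by (intro sum.cong) auto
  then show ?thesis unfolding JJ_def by simp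
qed

lemma JJ_Suc:
  assumes "i < length xs"
  shows "q \<in> JJ n (take (Suc i) xs) \<longleftrightarrow> (\<exists>j u. j \<in> JJ n (take i xs) \<and> q = j + u * xs!i)"
proof
  assume "q \<in> JJ n (take (Suc i) xs)"
  then obtain a b where q: "q = (\<Sum>j<Suc i. a j * xs!j) + XX^n * b"
    using assms JJ_take[of "Suc i" xs n] by auto
  have "(\<Sum>j<i. a j * xs!j) + XX^n * b \<in> JJ n (take i xs)"
    using assms JJ_take[of i xs n] by (auto intro!: exI[of _ a] exI[of _ b])
  moreover have "q = ((\<Sum>j<i. a j * xs!j) + XX^n * b) + a i * xs!i"
    using q by simp
  ultimately show "\<exists>j u. j \<in> JJ n (take i xs) \<and> q = j + u * xs!i" by blast
next
  assume "\<exists>j u. j \<in> JJ n (take i xs) \<and> q = j + u * xs!i"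
  then obtain a b u where q: "q = (\<Sum>j<i. a j * xs!j) + XX^n * b + u * xs!i"
    using assms JJ_take[of i xs n] by auto
  define a' where "a' = a(i := u)"
  have "(\<Sum>j<i. a j * xs!j) = (\<Sum>j<i. a' j * xs!j)"
    by (rule sum.cong) (auto simp: a'_def)
  then have "q = (\<Sum>j<Suc i. a' j * xs!j) + XX^n * b"
    using q by (simp add: a'_def algebra_simps)
  then show "q \<in> JJ n (take (Suc i) xs)"
    using assms JJ_take[of "Suc i" xs n] by (auto intro!: exI[of _ a'] exI[of _ b])
qed

lemma reg_JJ:
  assumes "Rn_regular_seq n xs" "i < length xs" "a * xs!i \<in> JJ n (take i xs)"
  shows "a \<in> JJ n (take i xs)"
proof -
  let ?a = "poly_cutoff n a"
  have "rmult n ?a (xs!i) = poly_cutoff n (a * xs!i)" by (simp add: rmult_def cut_mult_cut)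
  then have "rmult n ?a (xs!i) \<in> Rn_ideal_gen n (take i xs)"
    using assms(3) by (simp add: Rn_ideal_gen_eq cut_in_Rn JJ_cut_iff)
  then have "?a \<in> Rn_ideal_gen n (take i xs)"
    using assms(1,2) cut_in_Rn unfolding Rn_regular_seq_def by blast
  then show ?thesis by (simp add: Rn_ideal_gen_eq JJ_cut_iff)
qed

lemma JJ_mult_r: "q \<in> JJ n ys \<Longrightarrow> q * r \<in> JJ n ys"
  by (metis JJ_mult mult.commute)

lemma main_P:
  fixes xs :: "'a::idom poly list"
  assumes reg: "Rn_regular_seq n xs"
  shows "i \<le> length xs \<Longrightarrow> k \<le> n \<Longrightarrow> XX^k * m \<in> JJ n (take i xs)
         \<Longrightarrow> \<exists>s. m - XX^(n-k) * s \<in> JJ n (take i xs)"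
proof (induction i arbitrary: k m)
  case 0
  then obtain b where b: "XX^k * m = XX^n * b" by (auto simp: JJ_Nil)
  have "XX^n = (XX::'a poly)^k * XX^(n-k)" using 0 by (simp add: power_add[symmetric])
  then have "XX^k * m = XX^k * (XX^(n-k) * b)" using b by (simp add: mult.assoc)
  then have "m = XX^(n-k) * b" by simp
  then show ?case using JJ_0 by (intro exI[of _ b]) simp
next
  case (Suc i)
  let ?J = "JJ n (take i xs)"
  have il: "i < length xs" using Suc by simp
  have kn: "k \<le> n" using Suc by simp
  obtain j u where j: "j \<in> ?J" and e: "XX^k * m = j + u * xs!i"
    using Suc.prems(3) JJ_Suc[OF il] by blast
  have pw: "XX^n = (XX::'a poly)^(n-k) * XX^k" using kn by (simp add: power_add[symmetric])
  have "XX^(n-k) * (XX^k * m) = XX^(n-k) * (j + u*xs!i)" using e by simp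
  then have eq: "XX^n * m = XX^(n-k)*j + (XX^(n-k)*u)*xs!i"
    unfolding pw by (simp add: algebra_simps)
  have "(XX^(n-k) * u) * xs!i = XX^n * m - XX^(n-k) * j"
    by (simp add: eq)
  then have "(XX^(n-k) * u) * xs!i \<in> ?J" using JJ_diff JJ_XXn JJ_mult j by metis
  then have "XX^(n-k) * u \<in> ?J" using reg_JJ reg il by blast
  then obtain s where s: "u - XX^(n-(n-k)) * s \<in> ?J" using Suc.IH[of "n-k" u] il by auto
  have nk: "n-(n-k) = k" using kn by simp
  have "XX^k * (m - s * xs!i) = j + (u - XX^k * s) * xs!i" using e by (simp add: algebra_simps)
  then have "XX^k * (m - s * xs!i) \<in> ?J" using j s nk JJ_add JJ_mult_r by metis
  then obtain s' where s': "m - s*xs!i - XX^(n-k)*s' \<in> ?J" using Suc.IH[of k] il kn by auto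
  have "m - XX^(n-k)*s' = (m - s*xs!i - XX^(n-k)*s') + s * xs!i" by simp
  then have "m - XX^(n-k)*s' \<in> JJ n (take (Suc i) xs)" using JJ_Suc[OF il] s' by blast
  then show ?case by blast
qed

lemma Rn_add: "a \<in> Rn n \<Longrightarrow> b \<in> Rn n \<Longrightarrow> a + b \<in> Rn n"
  by (auto simp: Rn_def)

lemma M_add: "a \<in> Rn_ideal_gen n xs \<Longrightarrow> b \<in> Rn_ideal_gen n xs \<Longrightarrow> a + b \<in> Rn_ideal_gen n xs"
  by (simp add: Rn_ideal_gen_eq Rn_add JJ_add)

lemma M_mulcut: "a \<in> Rn_ideal_gen n xs \<Longrightarrow> poly_cutoff n (r * a) \<in> Rn_ideal_gen n xs"
  by (simp add: Rn_ideal_gen_eq cut_in_Rn JJ_cut_iff JJ_mult)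

lemma M_0: "0 \<in> Rn_ideal_gen n xs"
  by (simp add: Rn_ideal_gen_eq JJ_0 Rn_def)

lemma M_Rn: "a \<in> Rn_ideal_gen n xs \<Longrightarrow> a \<in> Rn n"
  by (simp add: Rn_ideal_gen_eq)

lemma cut_XX_mult: "poly_cutoff n (XX^a * poly_cutoff n (XX^b * (m::'a::comm_ring_1 poly))) = poly_cutoff n (XX^(a+b) * m)"
  by (simp add: cut_mult_cut2 power_add mult.assoc)

lemma filt0: "filt n (Rn_ideal_gen n xs) 0 = {0}"
proof -
  have "x \<in> Rn_ideal_gen n xs \<Longrightarrow> poly_cutoff n x = x" for x
    using cut_Rn[OF M_Rn[of x n xs]] by simp
  then show ?thesis by (auto simp: filt_def M_0)
qed

lemma coset_0: "coset {0} x = {x}"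
  by (auto simp: coset_def)

lemma lam_comp_coset:
  fixes xs :: "'a::comm_ring_1 poly list" and n :: nat
  defines "M \<equiv> Rn_ideal_gen n xs"
  shows "m \<in> filt n M (Suc k) \<Longrightarrow> lam_comp n M k (coset (filt n M k) m) = {poly_cutoff n (XX^k * m)}"
proof (induction k arbitrary: m)
  case 0
  then have "m \<in> M" by (simp add: filt_def)
  then have "poly_cutoff n m = m" using cut_Rn[OF M_Rn[of m n xs]] unfolding M_def by simp
  then show ?case unfolding M_def by (simp add: filt0 coset_0)
next
  case (Suc k)
  let ?C = "coset (filt n M (Suc k)) m"
  have mM: "m \<in> M" and m0: "poly_cutoff n (XX^(Suc (Suc k)) * m) = 0" using Suc.prems by (auto simp: filt_def)
  have "m \<in> ?C" using M_0 cut_XXn unfolding coset_def filt_def M_def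
    by (auto intro!: exI[of _ 0])
  then have "(SOME m'. m' \<in> ?C) \<in> ?C" by (rule someI)
  then obtain y where y: "y \<in> filt n M (Suc k)" and my: "(SOME m'. m' \<in> ?C) = m + y"
    by (auto simp: coset_def)
  define m' where "m' = m + y"
  have yM: "y \<in> M" and y0: "poly_cutoff n (XX^(Suc k) * y) = 0" using y by (auto simp: filt_def)
  have m'M: "m' \<in> M" using mM yM M_add unfolding m'_def M_def by blast
  define w where "w = poly_cutoff n (XX * m')"
  have lamC: "lam n M (Suc k) ?C = coset (filt n M k) w"
    unfolding lam_def w_def rmult_def tvar_def using my m'_def by (simp add: cut_mult_cut)
  have wM: "w \<in> M" unfolding w_def M_def using m'M M_mulcut unfolding M_def by blast
  have yy: "poly_cutoff n (XX^(Suc (Suc k)) * y) = 0"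
  proof -
    have e1: "1 + Suc k = Suc (Suc k)" by simp
    have "poly_cutoff n (XX^(Suc (Suc k)) * y) = poly_cutoff n (XX^1 * poly_cutoff n (XX^(Suc k) * y))"
      using cut_XX_mult[of n 1 "Suc k" y] unfolding e1 by (rule sym)
    also have "\<dots> = 0" unfolding y0 by simp
    finally show ?thesis .
  qed
  have "poly_cutoff n (XX^(Suc k) * w) = poly_cutoff n (XX^(Suc (Suc k)) * m')"
    unfolding w_def using cut_XX_mult[of n "Suc k" 1 m'] by simp
  also have "\<dots> = 0" unfolding m'_def distrib_left cut_plus m0 yy by simp
  finally have "w \<in> filt n M (Suc k)" using wM by (simp add: filt_def)
  then have "lam_comp n M k (coset (filt n M k) w) = {poly_cutoff n (XX^k * w)}" by (rule Suc.IH)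
  also have "poly_cutoff n (XX^k * w) = poly_cutoff n (XX^(Suc k) * m')"
    unfolding w_def using cut_XX_mult[of n k 1 m'] by simp
  also have "\<dots> = poly_cutoff n (XX^(Suc k) * m)"
    unfolding m'_def using y0 by (simp add: distrib_left cut_plus del: power_Suc)
  finally show ?case using lamC by simp
qed

theorem proposition3p7p2:
  fixes xs :: "'a::idom poly list" and n :: nat
  assumes "noetherian_ring TYPE('a)"
    and "n \<ge> 1"
    and "Rn_regular_seq n xs"
  shows "balanced n (Rn_ideal_gen n xs)"
proof -
  define M where "M = Rn_ideal_gen n xs"
  have fn: "filt n M n = M"
    unfolding filt_def M_def using cut_XXn by auto
  have n1: "Suc (n-1) = n" using assms(2) by simp
  have G1: "Gr n M 1 = (\<lambda>m. {m}) ` filt n M 1"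
    unfolding Gr_def M_def by (simp add: filt0 coset_0)
  have Gn: "bold_lam n M ` Gr n M n = (\<lambda>m. {m}) ` ((\<lambda>m. poly_cutoff n (XX^(n-1) * m)) ` M)"
  proof -
    have "bold_lam n M ` Gr n M n = (\<lambda>m. bold_lam n M (coset (filt n M (n-1)) m)) ` M"
      unfolding Gr_def fn by (simp add: image_image)
    also have "\<dots> = (\<lambda>m. {poly_cutoff n (XX^(n-1) * m)}) ` M"
    proof (rule image_cong[OF refl])
      fix m assume "m \<in> M"
      then have "m \<in> filt n M (Suc (n-1))" using fn n1 by simp
      then show "bold_lam n M (coset (filt n M (n-1)) m) = {poly_cutoff n (XX^(n-1) * m)}"
        unfolding bold_lam_def M_def by (rule lam_comp_coset)
    qed
    finally show ?thesis by (simp add: image_image)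
  qed
  have key: "(\<lambda>m. poly_cutoff n (XX^(n-1) * m)) ` M = filt n M 1"
  proof (intro equalityI subsetI)
    fix z assume "z \<in> (\<lambda>m. poly_cutoff n (XX^(n-1) * m)) ` M"
    then obtain m where mM: "m \<in> M" and z: "z = poly_cutoff n (XX^(n-1) * m)" by auto
    have "z \<in> M" unfolding z M_def using mM M_mulcut unfolding M_def by blast
    moreover have "poly_cutoff n (XX^1 * z) = 0"
      unfolding z cut_XX_mult using n1 cut_XXn by (simp add: add.commute)
    ultimately show "z \<in> filt n M 1" by (simp add: filt_def)
  next
    fix m assume "m \<in> filt n M 1"
    then have mM: "m \<in> M" and m0: "poly_cutoff n (XX * m) = 0" by (auto simp: filt_def)
    have "coeff m k = 0" if "k < n - 1" for k
    proof -
      have "coeff (poly_cutoff n (XX * m)) (Suc k) = coeff m k"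
        using that by (simp add: coeff_poly_cutoff)
      then show ?thesis using m0 by simp
    qed
    then have "poly_cutoff (n-1) m = 0" by (auto simp: poly_eq_iff coeff_poly_cutoff)
    then have mr: "m = XX^(n-1) * poly_shift (n-1) m" using cut_decomp[of m "n-1"] by simp
    define r where "r = poly_shift (n-1) m"
    have "m \<in> JJ n (take (length xs) xs)" using mM unfolding M_def by (simp add: Rn_ideal_gen_eq)
    then obtain s where s: "r - XX^(n-(n-1)) * s \<in> JJ n (take (length xs) xs)"
      using main_P[OF assms(3), of "length xs" "n-1" r] mr r_def by auto
    have nn: "n - (n-1) = 1" using assms(2) by simp
    define m' where "m' = poly_cutoff n (r - XX * s)"
    have "m' \<in> M" unfolding m'_def M_def Rn_ideal_gen_eq using s nn
      by (simp add: cut_in_Rn JJ_cut_iff)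
    moreover have "poly_cutoff n (XX^(n-1) * m') = m"
    proof -
      have "poly_cutoff n (XX^(n-1) * m') = poly_cutoff n (XX^(n-1) * (r - XX * s))"
        unfolding m'_def by (rule cut_mult_cut2)
      also have "XX^(n-1) * (r - XX * s) = m + XX^n * (- s)"
      proof -
        have p1: "XX^(n-1) * XX = (XX::'a poly)^n" using n1 power_Suc2 by metis
        have mr': "m = XX^(n-1) * r" using mr r_def by simp
        have "XX^(n-1) * (r - XX * s) = XX^(n-1)*r - (XX^(n-1)*XX)*s"
          by (simp only: right_diff_distrib mult.assoc)
        also have "\<dots> = m + XX^n * (- s)" unfolding p1 mr' by simp
        finally show ?thesis .
      qed
      also have "poly_cutoff n (m + XX^n * (- s)) = m"
        using cut_add_mult cut_Rn M_Rn mM unfolding M_def by metis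
      finally show ?thesis .
    qed
    ultimately show "m \<in> (\<lambda>m. poly_cutoff n (XX^(n-1) * m)) ` M" by (metis image_eqI)
  qed
  show ?thesis unfolding balanced_def M_def[symmetric] using Gn G1 key by simp
qed

end
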